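(* Fix an instance of the data in the context and a cycle basis of the network graph $(\mathcal B,\mathcal L)$. For each cycle $C$ of the basis, with buses labeled $1,\dots,n$ in cyclic order ($n=|C|$) and oriented edges $(1,2),\dots,(n-1,n),(n,1)$, impose: (1) if $n=3$: $s_{12}c_{33}+c_{23}s_{31}+s_{23}c_{31}=0$ and $c_{12}c_{33}-c_{23}c_{31}+s_{23}s_{31}=0$; (2) if $n=4$: $s_{12}c_{34}+c_{12}s_{34}+s_{23}c_{41}+c_{23}s_{41}=0$ and $c_{12}c_{34}-s_{12}s_{34}-c_{23}c_{41}+s_{23}s_{41}=0$; (3) if $n\ge5$ is odd: auxiliary real variables $\tilde c_{1,2i},\tilde s_{1,2i}$ for $i=2,\dots,\frac{n-1}{2}$, with $\tilde c_{12}=c_{12}$, $\tilde s_{12}=s_{12}$, and constraints, for $i=2,\dots,\frac{n-1}{2}$: $\tilde c_{1,2i-2}c_{2i-1,2i}-\tilde s_{1,2i-2}s_{2i-1,2i}-\tilde c_{1,2i}c_{2i-2,2i-1}-\tilde s_{1,2i}s_{2i-2,2i-1}=0$, $\tilde s_{1,2i-2}c_{2i-1,2i}+\tilde c_{1,2i-2}s_{2i-1,2i}-\tilde s_{1,2i}c_{2i-2,2i-1}+\tilde c_{1,2i}s_{2i-2,2i-1}=0$; and $\tilde c_{1,n-1}c_{n-1,n}-\tilde s_{1,n-1}s_{n-1,n}-c_{n,1}c_{n-1,n-1}=0$, $\tilde s_{1,n-1}c_{n-1,n}+\tilde c_{1,n-1}s_{n-1,n}+s_{n,1}c_{n-1,n-1}=0$;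 $\tilde s_{1,i}^2+\tilde c_{1,i}^2=c_{11}c_{ii}$ for every even $i$ with $2\le i\le n-1$; and $c_{ij}^2+s_{ij}^2=c_{ii}c_{jj}$ for every edge $(i,j)$ of $C$; (4) if $n\ge6$ is even: auxiliary real variables $\tilde c_{1,2i},\tilde s_{1,2i}$ for $i=2,\dots,\frac n2-1$, with $\tilde c_{12}=c_{12}$, $\tilde s_{12}=s_{12}$, $\tilde c_{1,n}=c_{1,n}$, $\tilde s_{1,n}=s_{1,n}$, and constraints, for $i=2,\dots,\frac n2$: $\tilde c_{1,2i-2}c_{2i-1,2i}-\tilde s_{1,2i-2}s_{2i-1,2i}-\tilde c_{1,2i}c_{2i-2,2i-1}-\tilde s_{1,2i}s_{2i-2,2i-1}=0$, $\tilde s_{1,2i-2}c_{2i-1,2i}+\tilde c_{1,2i-2}s_{2i-1,2i}-\tilde s_{1,2i}c_{2i-2,2i-1}+\tilde c_{1,2i}s_{2i-2,2i-1}=0$; $\tilde s_{1,i}^2+\tilde c_{1,i}^2=c_{11}c_{ii}$ for every even $i$ with $2\le i\le n-1$; and $c_{ij}^2+s_{ij}^2=c_{ii}c_{jj}$ for every edge $(i,j)$ of $C$. Then: (a) (validity) for every feasible point $(p^g,q^g,c,s,\theta)$ of the OPF formulation in the context, there exist values of the auxiliary variables such that all constraints (1)–(4) hold for every cycle of the basis; and (b) every $(p^g,q^g,c,s)$ satisfying (ALT), the coupling equalities $c_{ij}^2+s_{ij}^2=c_{ii}c_{jj}$ for all lines, and constraints (1)–(4) (for some values of the auxiliary variables)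 satisfies, for each cycle $C$ in the basis, $\sum_{(i,j)\in C}\operatorname{atan2}(s_{ij},c_{ij})=2\pi k$ for some integer $k$ (sum over the oriented edges of $C$).
   Context: Data: finite bus set $\mathcal B$, line set $\mathcal L$ (unordered pairs of distinct buses; variables $c_{ij},s_{ij}$ for both orientations of each line), $\delta(i)$ the neighbors of $i$, generator set $\mathcal G\subseteq\mathcal B$, reals $G_{ij},B_{ij}$ (lines), $G_{ii},B_{ii}$ (buses), demands $p_i^d,q_i^d$, voltage bounds $0<\underline V_i\le\overline V_i$, generator bounds $p_i^{\min}\le p_i^{\max}$, $q_i^{\min}\le q_i^{\max}$ ($i\in\mathcal G$). Variables $p_i^g,q_i^g$ for $i\in\mathcal G$, with $p_i^g=q_i^g=0$ for $i\notin\mathcal G$. (ALT): $p_i^g-p_i^d=G_{ii}c_{ii}+\sum_{j\in\delta(i)}(G_{ij}c_{ij}-B_{ij}s_{ij})$, $q_i^g-q_i^d=-B_{ii}c_{ii}+\sum_{j\in\delta(i)}(-B_{ij}c_{ij}-G_{ij}s_{ij})$, $\underline V_i^2\le c_{ii}\le\overline V_i^2$ ($i\in\mathcal B$); $c_{ij}=c_{ji}$, $s_{ij}=-s_{ji}$ (lines); $p_i^{\min}\le p_i^g\le p_i^{\max}$, $q_i^{\min}\le q_i^g\le q_i^{\max}$ ($i\in\mathcal G$). OPF formulation: variables $(p^g,q^g,c,s,\theta)$ with $\theta\in\mathbb R^{\mathcal B}$ satisfying (ALT), $c_{ij}^2+s_{ij}^2=c_{ii}c_{jj}$ and $\theta_j-\theta_i=\operatorname{atan2}(s_{ij},c_{ij})$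 for every line $(i,j)$. Here $\operatorname{atan2}(y,x)\in(-\pi,\pi]$ is the angle of the point $(x,y)\neq(0,0)$. A cycle basis is a basis of the cycle space of the graph consisting of cycles. *)

theory Defs
  imports "HOL-Analysis.Analysis"
begin

definition atan2 :: "real \<Rightarrow> real \<Rightarrow> real" where
  "atan2 y x = Arg (Complex x y)"

definition network :: "'b set \<Rightarrow> 'b set set \<Rightarrow> bool" where
  "network B L \<longleftrightarrow> finite B \<and> (\<forall>e\<in>L. \<exists>i j. e = {i, j} \<and> i \<noteq> j \<and> i \<in> B \<and> j \<in> B)"

definition nbrs :: "'b set set \<Rightarrow> 'b \<Rightarrow> 'b set" where
  "nbrs L i = {j. {i, j} \<in> L \<and> j \<noteq> i}"

definition is_cycle :: "'b set \<Rightarrow> 'b set set \<Rightarrow> 'b list \<Rightarrow> bool" where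
  "is_cycle B L vs \<longleftrightarrow> length vs \<ge> 3 \<and> distinct vs \<and> set vs \<subseteq> B \<and>
     (\<forall>i < length vs. {vs ! i, vs ! ((i + 1) mod length vs)} \<in> L)"

definition cycle_edges :: "'b list \<Rightarrow> 'b set set" where
  "cycle_edges vs = {{vs ! i, vs ! ((i + 1) mod length vs)} | i. i < length vs}"

text \<open>Cycle space over GF(2): edge sets with all degrees even; sums are symmetric differences.\<close>
definition even_subgraph :: "'b set \<Rightarrow> 'b set set \<Rightarrow> 'b set set \<Rightarrow> bool" where
  "even_subgraph B L F \<longleftrightarrow> F \<subseteq> L \<and> (\<forall>v\<in>B. even (card {e\<in>F. v \<in> e}))"

definition symdiff_sum :: "(nat \<Rightarrow> 'a set) \<Rightarrow> nat set \<Rightarrow> 'a set" where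
  "symdiff_sum E I = {x. odd (card {i\<in>I. x \<in> E i})}"

definition cycle_basis :: "'b set \<Rightarrow> 'b set set \<Rightarrow> 'b list list \<Rightarrow> bool" where
  "cycle_basis B L Cs \<longleftrightarrow>
     (\<forall>C\<in>set Cs. is_cycle B L C) \<and>
     (\<forall>I \<subseteq> {..<length Cs}. symdiff_sum (\<lambda>k. cycle_edges (Cs ! k)) I = {} \<longrightarrow> I = {}) \<and>
     (\<forall>F. even_subgraph B L F \<longrightarrow>
        (\<exists>I \<subseteq> {..<length Cs}. symdiff_sum (\<lambda>k. cycle_edges (Cs ! k)) I = F))"

definition ALT ::
  "'b set \<Rightarrow> 'b set set \<Rightarrow> 'b set \<Rightarrow> ('b \<Rightarrow> 'b \<Rightarrow> real) \<Rightarrow> ('b \<Rightarrow> 'b \<Rightarrow> real) \<Rightarrow>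
   ('b \<Rightarrow> real) \<Rightarrow> ('b \<Rightarrow> real) \<Rightarrow> ('b \<Rightarrow> real) \<Rightarrow> ('b \<Rightarrow> real) \<Rightarrow>
   ('b \<Rightarrow> real) \<Rightarrow> ('b \<Rightarrow> real) \<Rightarrow> ('b \<Rightarrow> real) \<Rightarrow> ('b \<Rightarrow> real) \<Rightarrow>
   ('b \<Rightarrow> real) \<Rightarrow> ('b \<Rightarrow> real) \<Rightarrow> ('b \<Rightarrow> 'b \<Rightarrow> real) \<Rightarrow> ('b \<Rightarrow> 'b \<Rightarrow> real) \<Rightarrow> bool" where
  "ALT B L G Gm Bm pd qd Vmin Vmax pmin pmax qmin qmax pg qg c s \<longleftrightarrow>
     (\<forall>i\<in>B. pg i - pd i = Gm i i * c i i + (\<Sum>j\<in>nbrs L i. Gm i j * c i j - Bm i j * s i j)) \<and>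
     (\<forall>i\<in>B. qg i - qd i = - Bm i i * c i i + (\<Sum>j\<in>nbrs L i. - Bm i j * c i j - Gm i j * s i j)) \<and>
     (\<forall>i\<in>B. (Vmin i)\<^sup>2 \<le> c i i \<and> c i i \<le> (Vmax i)\<^sup>2) \<and>
     (\<forall>i j. {i, j} \<in> L \<longrightarrow> c i j = c j i \<and> s i j = - s j i) \<and>
     (\<forall>i\<in>G. pmin i \<le> pg i \<and> pg i \<le> pmax i \<and> qmin i \<le> qg i \<and> qg i \<le> qmax i) \<and>
     (\<forall>i\<in>B - G. pg i = 0 \<and> qg i = 0)"

definition coupling :: "'b set set \<Rightarrow> ('b \<Rightarrow> 'b \<Rightarrow> real) \<Rightarrow> ('b \<Rightarrow> 'b \<Rightarrow> real) \<Rightarrow> bool" where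
  "coupling L c s \<longleftrightarrow> (\<forall>i j. {i, j} \<in> L \<longrightarrow> (c i j)\<^sup>2 + (s i j)\<^sup>2 = c i i * c j j)"

definition angle_cons :: "'b set set \<Rightarrow> ('b \<Rightarrow> 'b \<Rightarrow> real) \<Rightarrow> ('b \<Rightarrow> 'b \<Rightarrow> real) \<Rightarrow> ('b \<Rightarrow> real) \<Rightarrow> bool" where
  "angle_cons L c s \<theta> \<longleftrightarrow>
     (\<forall>e\<in>L. \<exists>i j. e = {i, j} \<and> \<theta> j - \<theta> i = atan2 (s i j) (c i j))"

text \<open>Cycle constraints (1)-(4) for a cycle vs (bus k = vs!(k-1), k = 1..n), with auxiliary
  variables ct k = c~_{1,k}, st k = s~_{1,k} (only the values at even k are used).\<close>
definition cycle_cons ::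
  "('b \<Rightarrow> 'b \<Rightarrow> real) \<Rightarrow> ('b \<Rightarrow> 'b \<Rightarrow> real) \<Rightarrow> 'b list \<Rightarrow> (nat \<Rightarrow> real) \<Rightarrow> (nat \<Rightarrow> real) \<Rightarrow> bool" where
  "cycle_cons c s vs ct st \<longleftrightarrow>
   (let n = length vs;
        C = (\<lambda>k m. c (vs ! (k - 1)) (vs ! (m - 1)));
        S = (\<lambda>k m. s (vs ! (k - 1)) (vs ! (m - 1)));
        nx = (\<lambda>k. if k = n then 1 else k + 1)
    in
    (n = 3 \<longrightarrow>
       S 1 2 * C 3 3 + C 2 3 * S 3 1 + S 2 3 * C 3 1 = 0 \<and>
       C 1 2 * C 3 3 - C 2 3 * C 3 1 + S 2 3 * S 3 1 = 0) \<and>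
    (n = 4 \<longrightarrow>
       S 1 2 * C 3 4 + C 1 2 * S 3 4 + S 2 3 * C 4 1 + C 2 3 * S 4 1 = 0 \<and>
       C 1 2 * C 3 4 - S 1 2 * S 3 4 - C 2 3 * C 4 1 + S 2 3 * S 4 1 = 0) \<and>
    (odd n \<and> 5 \<le> n \<longrightarrow>
       ct 2 = C 1 2 \<and> st 2 = S 1 2 \<and>
       (\<forall>i\<in>{2..(n - 1) div 2}.
          ct (2*i-2) * C (2*i-1) (2*i) - st (2*i-2) * S (2*i-1) (2*i)
            - ct (2*i) * C (2*i-2) (2*i-1) - st (2*i) * S (2*i-2) (2*i-1) = 0 \<and>
          st (2*i-2) * C (2*i-1) (2*i) + ct (2*i-2) * S (2*i-1) (2*i)
            - st (2*i) * C (2*i-2) (2*i-1) + ct (2*i) * S (2*i-2) (2*i-1) = 0) \<and>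
       ct (n-1) * C (n-1) n - st (n-1) * S (n-1) n - C n 1 * C (n-1) (n-1) = 0 \<and>
       st (n-1) * C (n-1) n + ct (n-1) * S (n-1) n + S n 1 * C (n-1) (n-1) = 0 \<and>
       (\<forall>i. even i \<and> 2 \<le> i \<and> i \<le> n - 1 \<longrightarrow> (st i)\<^sup>2 + (ct i)\<^sup>2 = C 1 1 * C i i) \<and>
       (\<forall>k\<in>{1..n}. (C k (nx k))\<^sup>2 + (S k (nx k))\<^sup>2 = C k k * C (nx k) (nx k))) \<and>
    (even n \<and> 6 \<le> n \<longrightarrow>
       ct 2 = C 1 2 \<and> st 2 = S 1 2 \<and> ct n = C 1 n \<and> st n = S 1 n \<and>
       (\<forall>i\<in>{2..n div 2}.
          ct (2*i-2) * C (2*i-1) (2*i) - st (2*i-2) * S (2*i-1) (2*i)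
            - ct (2*i) * C (2*i-2) (2*i-1) - st (2*i) * S (2*i-2) (2*i-1) = 0 \<and>
          st (2*i-2) * C (2*i-1) (2*i) + ct (2*i-2) * S (2*i-1) (2*i)
            - st (2*i) * C (2*i-2) (2*i-1) + ct (2*i) * S (2*i-2) (2*i-1) = 0) \<and>
       (\<forall>i. even i \<and> 2 \<le> i \<and> i \<le> n - 1 \<longrightarrow> (st i)\<^sup>2 + (ct i)\<^sup>2 = C 1 1 * C i i) \<and>
       (\<forall>k\<in>{1..n}. (C k (nx k))\<^sup>2 + (S k (nx k))\<^sup>2 = C k k * C (nx k) (nx k))))"

definition cycle_angle_sum :: "('b \<Rightarrow> 'b \<Rightarrow> real) \<Rightarrow> ('b \<Rightarrow> 'b \<Rightarrow> real) \<Rightarrow> 'b list \<Rightarrow> real" where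
  "cycle_angle_sum c s vs =
     (\<Sum>i<length vs. atan2 (s (vs ! i) (vs ! ((i + 1) mod length vs)))
                          (c (vs ! i) (vs ! ((i + 1) mod length vs))))"

end

theory Submission
  imports Defs
begin

lemma arg_sum:
  fixes w :: "nat \<Rightarrow> complex"
  assumes nz: "\<forall>i<n. w i \<noteq> 0" and pr: "(\<Prod>i<n. w i) = complex_of_real R" and R: "R > 0"
  shows "\<exists>k::int. (\<Sum>i<n. Arg (w i)) = 2 * pi * of_int k"
proof -
  have "exp (\<i> * complex_of_real (\<Sum>i<n. Arg (w i))) = (\<Prod>i<n. exp (\<i> * complex_of_real (Arg (w i))))"
    by (simp add: sum_distrib_left exp_sum)
  also have "\<dots> = (\<Prod>i<n. sgn (w i))"
    using nz by (intro prod.cong) (auto simp: cis_conv_exp[symmetric] cis_Arg)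
  also have "\<dots> = sgn (\<Prod>i<n. w i)"
    by (induction n) (auto simp: sgn_mult)
  also have "\<dots> = 1" using pr R by (simp add: sgn_of_real)
  finally have "exp (\<i> * complex_of_real (\<Sum>i<n. Arg (w i))) = 1" .
  then obtain m where "(\<Sum>i<n. Arg (w i)) = real_of_int (2*m) * pi"
    by (auto simp: exp_eq_1)
  then show ?thesis by (intro exI[of _ m]) simp
qed

lemma pos_help:
  fixes P X :: complex
  assumes "P * complex_of_real a = cnj X * X" "a > 0" "X \<noteq> 0"
  shows "\<exists>R>0. P = complex_of_real R"
proof -
  have "cnj X * X = complex_of_real ((cmod X)^2)" using complex_norm_square[of X] by (simp add: mult.commute)
  with assms have "P = complex_of_real ((cmod X)^2 / a)" 
    by (simp add: field_simps)
  then show ?thesis using assms by (intro exI[of _ "(cmod X)^2 / a"]) auto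
qed

lemma chain:
  fixes W Zt :: "nat \<Rightarrow> complex"
  assumes base: "Zt 2 = W 0"
    and rec: "\<forall>i\<in>{2..bnd}. Zt (2*i-2) * W (2*i-2) = Zt (2*i) * cnj (W (2*i-3))"
    and nz: "\<forall>i\<in>{2..bnd}. W (2*i-3) \<noteq> 0"
  shows "1 \<le> j \<Longrightarrow> j \<le> bnd \<Longrightarrow> \<exists>r>0. Zt (2*j) = complex_of_real r * (\<Prod>i<2*j-1. W i)"
proof (induction j)
  case 0 then show ?case by simp
next
  case (Suc j)
  show ?case
  proof (cases "j = 0")
    case True then show ?thesis using base by (intro exI[of _ 1]) simp
  next
    case False
    then obtain r where r: "r > 0" "Zt (2*j) = complex_of_real r * (\<Prod>i<2*j-1. W i)"
      using Suc by auto
    have "Suc j \<in> {2..bnd}" using False Suc by auto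
    from rec[rule_format, OF this] nz[rule_format, OF this]
    have e: "Zt (2*j) * W (2*j) = Zt (2*j+2) * cnj (W (2*j-1))" and w: "W (2*j-1) \<noteq> 0"
      by (simp_all add: numeral_3_eq_3)
    define w where "w = W (2*j-1)"
    have cw: "cnj w * w = complex_of_real ((cmod w)^2)" using complex_norm_square[of w] by (simp add: mult.commute)
    have cw0: "cmod w \<noteq> 0" using w by (simp add: w_def)
    have P: "(\<Prod>i<2*Suc j-1. W i) = (\<Prod>i<2*j-1. W i) * W (2*j-1) * W (2*j)"
    proof -
      have a: "(\<Prod>i<Suc (Suc k). W i) = (\<Prod>i<k. W i) * W k * W (Suc k)" for k
        by (simp add: lessThan_Suc mult.assoc)
      have "2*Suc j - 1 = Suc (Suc (2*j-1))" using False by simp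
      moreover have "Suc (2*j-1) = 2*j" using False by simp
      ultimately show ?thesis using a[of "2*j-1"] by simp
    qed
    have "Zt (2*Suc j) * complex_of_real ((cmod w)^2) = complex_of_real r * (\<Prod>i<2*Suc j-1. W i)"
      unfolding P cw[symmetric] using e r(2) by (simp add: w_def algebra_simps)
    then have "Zt (2*Suc j) = complex_of_real (r / (cmod w)^2) * (\<Prod>i<2*Suc j-1. W i)"
      using cw0 by (simp add: field_simps)
    then show ?thesis using r cw0 by (intro exI[of _ "r / (cmod w)^2"]) simp
  qed
qed


lemma ext3:
  assumes cc: "cycle_cons c s vs ct st" and n: "length vs = 3"
  shows "s (vs!0) (vs!1) * c (vs!2) (vs!2) + c (vs!1) (vs!2) * s (vs!2) (vs!0) + s (vs!1) (vs!2) * c (vs!2) (vs!0) = 0 \<and>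
        c (vs!0) (vs!1) * c (vs!2) (vs!2) - c (vs!1) (vs!2) * c (vs!2) (vs!0) + s (vs!1) (vs!2) * s (vs!2) (vs!0) = 0"
  using cc unfolding cycle_cons_def Let_def n by simp

lemma ext4:
  assumes cc: "cycle_cons c s vs ct st" and n: "length vs = 4"
  shows "s (vs!0) (vs!1) * c (vs!2) (vs!3) + c (vs!0) (vs!1) * s (vs!2) (vs!3) + s (vs!1) (vs!2) * c (vs!3) (vs!0) + c (vs!1) (vs!2) * s (vs!3) (vs!0) = 0 \<and>
        c (vs!0) (vs!1) * c (vs!2) (vs!3) - s (vs!0) (vs!1) * s (vs!2) (vs!3) - c (vs!1) (vs!2) * c (vs!3) (vs!0) + s (vs!1) (vs!2) * s (vs!3) (vs!0) = 0"
  using cc unfolding cycle_cons_def Let_def n by simp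

lemma ext_odd:
  assumes cc: "cycle_cons c s vs ct st" and n: "length vs = n" "odd n" "n \<ge> 5"
  shows "ct 2 = c (vs!0) (vs!1) \<and> st 2 = s (vs!0) (vs!1) \<and>
   (\<forall>i\<in>{2..(n-1) div 2}.
     ct (2*i-2) * c (vs!(2*i-2)) (vs!(2*i-1)) - st (2*i-2) * s (vs!(2*i-2)) (vs!(2*i-1))
     - ct (2*i) * c (vs!(2*i-3)) (vs!(2*i-2)) - st (2*i) * s (vs!(2*i-3)) (vs!(2*i-2)) = 0 \<and>
     st (2*i-2) * c (vs!(2*i-2)) (vs!(2*i-1)) + ct (2*i-2) * s (vs!(2*i-2)) (vs!(2*i-1))
     - st (2*i) * c (vs!(2*i-3)) (vs!(2*i-2)) + ct (2*i) * s (vs!(2*i-3)) (vs!(2*i-2)) = 0) \<and>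
   ct (n-1) * c (vs!(n-2)) (vs!(n-1)) - st (n-1) * s (vs!(n-2)) (vs!(n-1)) - c (vs!(n-1)) (vs!0) * c (vs!(n-2)) (vs!(n-2)) = 0 \<and>
   st (n-1) * c (vs!(n-2)) (vs!(n-1)) + ct (n-1) * s (vs!(n-2)) (vs!(n-1)) + s (vs!(n-1)) (vs!0) * c (vs!(n-2)) (vs!(n-2)) = 0"
  using cc n unfolding cycle_cons_def Let_def
  by (simp add: numeral_2_eq_2 numeral_3_eq_3)

lemma ext_even:
  assumes cc: "cycle_cons c s vs ct st" and n: "length vs = n" "even n" "n \<ge> 6"
  shows "ct 2 = c (vs!0) (vs!1) \<and> st 2 = s (vs!0) (vs!1) \<and>
   ct n = c (vs!0) (vs!(n-1)) \<and> st n = s (vs!0) (vs!(n-1)) \<and>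
   (\<forall>i\<in>{2..n div 2}.
     ct (2*i-2) * c (vs!(2*i-2)) (vs!(2*i-1)) - st (2*i-2) * s (vs!(2*i-2)) (vs!(2*i-1))
     - ct (2*i) * c (vs!(2*i-3)) (vs!(2*i-2)) - st (2*i) * s (vs!(2*i-3)) (vs!(2*i-2)) = 0 \<and>
     st (2*i-2) * c (vs!(2*i-2)) (vs!(2*i-1)) + ct (2*i-2) * s (vs!(2*i-2)) (vs!(2*i-1))
     - st (2*i) * c (vs!(2*i-3)) (vs!(2*i-2)) + ct (2*i) * s (vs!(2*i-3)) (vs!(2*i-2)) = 0)"
  using cc n unfolding cycle_cons_def Let_def
  by (simp add: numeral_2_eq_2 numeral_3_eq_3)

lemma cycle_b:
  fixes c s :: "'b \<Rightarrow> 'b \<Rightarrow> real" and B :: "'b set" and vs :: "'b list"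
  assumes cyc: "is_cycle B L vs"
    and sym: "\<forall>i j. {i,j} \<in> L \<longrightarrow> c i j = c j i \<and> s i j = - s j i"
    and pos: "\<forall>i\<in>B. c i i > 0"
    and coup: "coupling L c s"
    and cc: "cycle_cons c s vs ct st"
  shows "\<exists>k::int. cycle_angle_sum c s vs = 2 * pi * of_int k"
proof -
  define n where "n = length vs"
  define W where "W i = Complex (c (vs!i) (vs!((i+1) mod n))) (s (vs!i) (vs!((i+1) mod n)))" for i
  have n3: "n \<ge> 3" and inB: "\<forall>i<n. vs!i \<in> B" and edge: "\<forall>i<n. {vs!i, vs!((i+1) mod n)} \<in> L"
    using cyc by (auto simp: is_cycle_def n_def)
  have cpos: "\<And>i. i<n \<Longrightarrow> c (vs!i) (vs!i) > 0" using inB pos by auto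
  have Wnz: "\<forall>i<n. W i \<noteq> 0"
  proof (intro allI impI)
    fix i assume i: "i<n"
    have "(c (vs!i) (vs!((i+1) mod n)))^2 + (s (vs!i) (vs!((i+1) mod n)))^2
        = c (vs!i) (vs!i) * c (vs!((i+1) mod n)) (vs!((i+1) mod n))"
      using coup edge i by (auto simp: coupling_def)
    moreover have "c (vs!i) (vs!i) * c (vs!((i+1) mod n)) (vs!((i+1) mod n)) > 0"
      using cpos i n3 by simp
    ultimately show "W i \<noteq> 0" by (auto simp: W_def complex_eq_iff)
  qed
  have Wlt: "\<And>i. i+1 < n \<Longrightarrow> W i = Complex (c (vs!i) (vs!(i+1))) (s (vs!i) (vs!(i+1)))"
    by (simp add: W_def)
  have Wlast: "W (n-1) = Complex (c (vs!(n-1)) (vs!0)) (s (vs!(n-1)) (vs!0))"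
    using n3 by (simp add: W_def)
  have prodpos: "\<exists>R>0. (\<Prod>i<n. W i) = complex_of_real R"
  proof -
    have "n = 3 \<or> n = 4 \<or> (odd n \<and> n \<ge> 5) \<or> (even n \<and> n \<ge> 6)" using n3 by presburger
    then consider "n = 3" | "n = 4" | "odd n" "n \<ge> 5" | "even n" "n \<ge> 6" by blast
    then show ?thesis
    proof cases
      case 1
      have e: "s (vs!0) (vs!1) * c (vs!2) (vs!2) + c (vs!1) (vs!2) * s (vs!2) (vs!0) + s (vs!1) (vs!2) * c (vs!2) (vs!0) = 0 \<and>
        c (vs!0) (vs!1) * c (vs!2) (vs!2) - c (vs!1) (vs!2) * c (vs!2) (vs!0) + s (vs!1) (vs!2) * s (vs!2) (vs!0) = 0"
        using ext3[OF cc] 1 n_def by simp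
      have W: "W 0 = Complex (c (vs!0) (vs!1)) (s (vs!0) (vs!1))" "W 1 = Complex (c (vs!1) (vs!2)) (s (vs!1) (vs!2))"
         "W 2 = Complex (c (vs!2) (vs!0)) (s (vs!2) (vs!0))" using 1 Wlt[of 0] Wlt[of 1] Wlast by (simp_all add: numeral_2_eq_2 numeral_3_eq_3)
      have h: "W 0 * complex_of_real (c (vs!2) (vs!2)) = cnj (W 1 * W 2)"
        using e unfolding W by (simp add: complex_eq_iff; simp add: algebra_simps)
      have pr: "(\<Prod>i<n. W i) = W 0 * W 1 * W 2" using 1 by (simp add: numeral_eq_Suc lessThan_Suc)
      have "(\<Prod>i<n. W i) * complex_of_real (c (vs!2) (vs!2)) = cnj (W 1 * W 2) * (W 1 * W 2)"
        unfolding pr h[symmetric] by (simp add: algebra_simps)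
      moreover have "c (vs!2) (vs!2) > 0" using cpos[of 2] 1 by simp
      moreover have "W 1 * W 2 \<noteq> 0" using Wnz 1 by simp
      ultimately show ?thesis by (rule pos_help)
    next
      case 2
      have e: "s (vs!0) (vs!1) * c (vs!2) (vs!3) + c (vs!0) (vs!1) * s (vs!2) (vs!3) + s (vs!1) (vs!2) * c (vs!3) (vs!0) + c (vs!1) (vs!2) * s (vs!3) (vs!0) = 0 \<and>
        c (vs!0) (vs!1) * c (vs!2) (vs!3) - s (vs!0) (vs!1) * s (vs!2) (vs!3) - c (vs!1) (vs!2) * c (vs!3) (vs!0) + s (vs!1) (vs!2) * s (vs!3) (vs!0) = 0"
        using ext4[OF cc] 2 n_def by simp
      have W: "W 0 = Complex (c (vs!0) (vs!1)) (s (vs!0) (vs!1))" "W 1 = Complex (c (vs!1) (vs!2)) (s (vs!1) (vs!2))"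
         "W 2 = Complex (c (vs!2) (vs!3)) (s (vs!2) (vs!3))" "W 3 = Complex (c (vs!3) (vs!0)) (s (vs!3) (vs!0))" using 2 Wlt[of 0] Wlt[of 1] Wlt[of 2] Wlast by (simp_all add: numeral_2_eq_2 numeral_3_eq_3)
      have h: "W 0 * W 2 = cnj (W 1 * W 3)"
        using e unfolding W by (simp add: complex_eq_iff; simp add: algebra_simps)
      have pr: "(\<Prod>i<n. W i) = W 0 * W 1 * W 2 * W 3" using 2 by (simp add: numeral_eq_Suc lessThan_Suc)
      have "(\<Prod>i<n. W i) * complex_of_real 1 = cnj (W 1 * W 3) * (W 1 * W 3)"
        unfolding pr h[symmetric] by (simp add: algebra_simps)
      moreover have "(1::real) > 0" by simp
      moreover have "W 1 * W 3 \<noteq> 0" using Wnz 2 by simp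
      ultimately show ?thesis by (rule pos_help)
    next
      case 3
      note ex = ext_odd[OF cc n_def[symmetric] 3]
      note exb = ex[THEN conjunct1] ex[THEN conjunct2, THEN conjunct1]
      note exr = ex[THEN conjunct2, THEN conjunct2, THEN conjunct1]
      note exf = ex[THEN conjunct2, THEN conjunct2, THEN conjunct2]
      define Zt where "Zt k = Complex (ct k) (st k)" for k
      define bnd where "bnd = (n-1) div 2"
      have bn: "2*bnd = n-1" "bnd \<ge> 2" using 3 by (auto simp: bnd_def)
      have base: "Zt 2 = W 0" using exb Wlt[of 0] n3 by (simp add: Zt_def)
      have rec: "\<forall>i\<in>{2..bnd}. Zt (2*i-2) * W (2*i-2) = Zt (2*i) * cnj (W (2*i-3))"
      proof
        fix i assume i: "i \<in> {2..bnd}"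
        have w1: "W (2*i-2) = Complex (c (vs!(2*i-2)) (vs!(2*i-1))) (s (vs!(2*i-2)) (vs!(2*i-1)))"
          using Wlt[of "2*i-2"] i bn by (auto simp: Suc_diff_Suc numeral_2_eq_2)
        have w2: "W (2*i-3) = Complex (c (vs!(2*i-3)) (vs!(2*i-2))) (s (vs!(2*i-3)) (vs!(2*i-2)))"
          using Wlt[of "2*i-3"] i bn by (auto simp: Suc_diff_Suc numeral_2_eq_2 numeral_3_eq_3)
        show "Zt (2*i-2) * W (2*i-2) = Zt (2*i) * cnj (W (2*i-3))"
          using exr[rule_format, OF i[unfolded bnd_def]] unfolding w1 w2 Zt_def by (simp add: complex_eq_iff; simp add: algebra_simps)
      qed
      have nz: "\<forall>i\<in>{2..bnd}. W (2*i-3) \<noteq> 0" using Wnz bn by auto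
      have "\<exists>r>0. Zt (2*bnd) = complex_of_real r * (\<Prod>i<2*bnd-1. W i)"
        using chain[OF base rec nz, of bnd] bn by simp
      moreover have eq: "2*bnd - 1 = n-2" using bn by simp
      ultimately obtain r where r0: "r > 0" and r1: "Zt (2*bnd) = complex_of_real r * (\<Prod>i<2*bnd-1. W i)"
        by blast
      have r: "r > 0" "Zt (n-1) = complex_of_real r * (\<Prod>i<n-2. W i)"
        using r0 r1 unfolding eq bn(1) by (auto simp: numeral_2_eq_2)
      have w1: "W (n-2) = Complex (c (vs!(n-2)) (vs!(n-1))) (s (vs!(n-2)) (vs!(n-1)))"
        using Wlt[of "n-2"] n3 by (auto simp: Suc_diff_Suc numeral_2_eq_2)
      have fin: "Zt (n-1) * W (n-2) = cnj (W (n-1)) * complex_of_real (c (vs!(n-2)) (vs!(n-2)))"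
        using exf unfolding w1 Wlast Zt_def by (simp add: complex_eq_iff; simp add: algebra_simps)
      have P: "(\<Prod>i<n. W i) = (\<Prod>i<n-2. W i) * W (n-2) * W (n-1)"
      proof -
        have a: "(\<Prod>i<Suc (Suc k). W i) = (\<Prod>i<k. W i) * W k * W (Suc k)" for k
          by (simp add: lessThan_Suc mult.assoc)
        have "n = Suc (Suc (n-2))" "Suc (n-2) = n-1" using n3 by auto
        then show ?thesis using a[of "n-2"] by metis
      qed
      have cc2: "c (vs!(n-2)) (vs!(n-2)) > 0" using cpos n3 by auto
      have "(\<Prod>i<n. W i) * complex_of_real r = (Zt (n-1) * W (n-2)) * W (n-1)"
        unfolding P r(2) by (simp add: algebra_simps)
      also have "\<dots> = complex_of_real (c (vs!(n-2)) (vs!(n-2))) * (cnj (W (n-1)) * W (n-1))"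
        unfolding fin by (simp add: algebra_simps)
      finally have "(\<Prod>i<n. W i) * complex_of_real (r / c (vs!(n-2)) (vs!(n-2))) = cnj (W (n-1)) * W (n-1)"
        using cc2 by (simp add: field_simps)
      moreover have "r / c (vs!(n-2)) (vs!(n-2)) > 0" using r cc2 by simp
      moreover have "W (n-1) \<noteq> 0" using Wnz n3 by simp
      ultimately show ?thesis by (rule pos_help)
    next
      case 4
      note ex = ext_even[OF cc n_def[symmetric] 4]
      note exb = ex[THEN conjunct1] ex[THEN conjunct2, THEN conjunct1]
      note exf = ex[THEN conjunct2, THEN conjunct2, THEN conjunct1] ex[THEN conjunct2, THEN conjunct2, THEN conjunct2, THEN conjunct1]
      note exr = ex[THEN conjunct2, THEN conjunct2, THEN conjunct2, THEN conjunct2]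
      define Zt where "Zt k = Complex (ct k) (st k)" for k
      define bnd where "bnd = n div 2"
      have bn: "2*bnd = n" "bnd \<ge> 3" using 4 by (auto simp: bnd_def)
      have base: "Zt 2 = W 0" using exb Wlt[of 0] n3 by (simp add: Zt_def)
      have rec: "\<forall>i\<in>{2..bnd}. Zt (2*i-2) * W (2*i-2) = Zt (2*i) * cnj (W (2*i-3))"
      proof
        fix i assume i: "i \<in> {2..bnd}"
        have w1: "W (2*i-2) = Complex (c (vs!(2*i-2)) (vs!(2*i-1))) (s (vs!(2*i-2)) (vs!(2*i-1)))"
          using Wlt[of "2*i-2"] i bn by (auto simp: Suc_diff_Suc numeral_2_eq_2)
        have w2: "W (2*i-3) = Complex (c (vs!(2*i-3)) (vs!(2*i-2))) (s (vs!(2*i-3)) (vs!(2*i-2)))"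
          using Wlt[of "2*i-3"] i bn by (auto simp: Suc_diff_Suc numeral_2_eq_2 numeral_3_eq_3)
        show "Zt (2*i-2) * W (2*i-2) = Zt (2*i) * cnj (W (2*i-3))"
          using exr[rule_format, OF i[unfolded bnd_def]] unfolding w1 w2 Zt_def by (simp add: complex_eq_iff; simp add: algebra_simps)
      qed
      have nz: "\<forall>i\<in>{2..bnd}. W (2*i-3) \<noteq> 0" using Wnz bn by auto
      obtain r where r: "r > 0" "Zt n = complex_of_real r * (\<Prod>i<n-1. W i)"
        using chain[OF base rec nz, of bnd] bn by auto
      have "{vs!(n-1), vs!0} \<in> L" using edge[rule_format, of "n-1"] n3 by simp
      then have "c (vs!0) (vs!(n-1)) = c (vs!(n-1)) (vs!0) \<and> s (vs!0) (vs!(n-1)) = - s (vs!(n-1)) (vs!0)"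
        using sym by (metis insert_commute)
      then have fin: "Zt n = cnj (W (n-1))"
        using exf unfolding Wlast Zt_def by (simp add: complex_eq_iff)
      have P: "(\<Prod>i<n. W i) = (\<Prod>i<n-1. W i) * W (n-1)"
      proof -
        have "n = Suc (n-1)" using n3 by auto
        then show ?thesis by (metis lessThan_Suc prod.insert finite_lessThan lessThan_iff less_irrefl mult.commute)
      qed
      have "(\<Prod>i<n. W i) * complex_of_real r = cnj (W (n-1)) * W (n-1)"
        unfolding P fin[symmetric] r(2) by (simp add: algebra_simps)
      then show ?thesis using pos_help r Wnz n3 by auto
    qed
  qed
  have "cycle_angle_sum c s vs = (\<Sum>i<n. Arg (W i))"
    by (simp add: cycle_angle_sum_def atan2_def W_def n_def)
  then show ?thesis using arg_sum[OF Wnz] prodpos by metis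
qed


lemma coup_raw:
  fixes n :: nat
  assumes "\<forall>k<n. P k ((k+1) mod n)"
  shows "\<forall>k\<in>{1..n}. P (k-1) ((if k = n then 1 else k+1) - 1)"
proof
  fix k assume k: "k \<in> {1..n}"
  then have "k - 1 < n" by auto
  with assms have "P (k-1) ((k-1+1) mod n)" by blast
  moreover have "(k-1+1) mod n = (if k = n then 1 else k+1) - 1" using k by auto
  ultimately show "P (k-1) ((if k = n then 1 else k+1) - 1)" by simp
qed

lemma cc_intro:
  fixes n :: nat and c s :: "'b \<Rightarrow> 'b \<Rightarrow> real"
  assumes n: "length vs = n"
  and e3: "n = 3 \<longrightarrow> s (vs!0) (vs!1) * c (vs!2) (vs!2) + c (vs!1) (vs!2) * s (vs!2) (vs!0) + s (vs!1) (vs!2) * c (vs!2) (vs!0) = 0 \<and>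
        c (vs!0) (vs!1) * c (vs!2) (vs!2) - c (vs!1) (vs!2) * c (vs!2) (vs!0) + s (vs!1) (vs!2) * s (vs!2) (vs!0) = 0"
  and e4: "n = 4 \<longrightarrow> s (vs!0) (vs!1) * c (vs!2) (vs!3) + c (vs!0) (vs!1) * s (vs!2) (vs!3) + s (vs!1) (vs!2) * c (vs!3) (vs!0) + c (vs!1) (vs!2) * s (vs!3) (vs!0) = 0 \<and>
        c (vs!0) (vs!1) * c (vs!2) (vs!3) - s (vs!0) (vs!1) * s (vs!2) (vs!3) - c (vs!1) (vs!2) * c (vs!3) (vs!0) + s (vs!1) (vs!2) * s (vs!3) (vs!0) = 0"
  and b2: "ct 2 = c (vs!0) (vs!1) \<and> st 2 = s (vs!0) (vs!1)"
  and bn: "ct n = c (vs!0) (vs!(n-1)) \<and> st n = s (vs!0) (vs!(n-1))"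
  and rec: "\<forall>i. 2 \<le> i \<and> 2*i \<le> n \<longrightarrow>
     ct (2*i-2) * c (vs!(2*i-2)) (vs!(2*i-1)) - st (2*i-2) * s (vs!(2*i-2)) (vs!(2*i-1))
     - ct (2*i) * c (vs!(2*i-3)) (vs!(2*i-2)) - st (2*i) * s (vs!(2*i-3)) (vs!(2*i-2)) = 0 \<and>
     st (2*i-2) * c (vs!(2*i-2)) (vs!(2*i-1)) + ct (2*i-2) * s (vs!(2*i-2)) (vs!(2*i-1))
     - st (2*i) * c (vs!(2*i-3)) (vs!(2*i-2)) + ct (2*i) * s (vs!(2*i-3)) (vs!(2*i-2)) = 0"
  and fin: "odd n \<and> n \<ge> 5 \<longrightarrow>
   ct (n-1) * c (vs!(n-2)) (vs!(n-1)) - st (n-1) * s (vs!(n-2)) (vs!(n-1)) - c (vs!(n-1)) (vs!0) * c (vs!(n-2)) (vs!(n-2)) = 0 \<and>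
   st (n-1) * c (vs!(n-2)) (vs!(n-1)) + ct (n-1) * s (vs!(n-2)) (vs!(n-1)) + s (vs!(n-1)) (vs!0) * c (vs!(n-2)) (vs!(n-2)) = 0"
  and sq: "\<forall>i. even i \<and> 2 \<le> i \<and> i \<le> n - 1 \<longrightarrow> (st i)\<^sup>2 + (ct i)\<^sup>2 = c (vs!0) (vs!0) * c (vs!(i-1)) (vs!(i-1))"
  and cp: "\<forall>k<n. (c (vs!k) (vs!((k+1) mod n)))\<^sup>2 + (s (vs!k) (vs!((k+1) mod n)))\<^sup>2
           = c (vs!k) (vs!k) * c (vs!((k+1) mod n)) (vs!((k+1) mod n))"
  shows "cycle_cons c s vs ct st"
proof -
  have cr: "\<forall>k\<in>{1..n}. (c (vs!(k-1)) (vs!((if k = n then 1 else k+1) - 1)))\<^sup>2 + (s (vs!(k-1)) (vs!((if k = n then 1 else k+1) - 1)))\<^sup>2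
           = c (vs!(k-1)) (vs!(k-1)) * c (vs!((if k = n then 1 else k+1) - 1)) (vs!((if k = n then 1 else k+1) - 1))"
    using coup_raw[of n "\<lambda>p q. (c (vs!p) (vs!q))\<^sup>2 + (s (vs!p) (vs!q))\<^sup>2 = c (vs!p) (vs!p) * c (vs!q) (vs!q)"] cp
    by blast
  have rec1: "\<forall>i\<in>{2..(n-1) div 2}.
     ct (2*i-2) * c (vs!(2*i-2)) (vs!(2*i-1)) - st (2*i-2) * s (vs!(2*i-2)) (vs!(2*i-1))
     - ct (2*i) * c (vs!(2*i-3)) (vs!(2*i-2)) - st (2*i) * s (vs!(2*i-3)) (vs!(2*i-2)) = 0 \<and>
     st (2*i-2) * c (vs!(2*i-2)) (vs!(2*i-1)) + ct (2*i-2) * s (vs!(2*i-2)) (vs!(2*i-1))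
     - st (2*i) * c (vs!(2*i-3)) (vs!(2*i-2)) + ct (2*i) * s (vs!(2*i-3)) (vs!(2*i-2)) = 0"
    using rec by auto
  have rec2: "\<forall>i\<in>{2..n div 2}.
     ct (2*i-2) * c (vs!(2*i-2)) (vs!(2*i-1)) - st (2*i-2) * s (vs!(2*i-2)) (vs!(2*i-1))
     - ct (2*i) * c (vs!(2*i-3)) (vs!(2*i-2)) - st (2*i) * s (vs!(2*i-3)) (vs!(2*i-2)) = 0 \<and>
     st (2*i-2) * c (vs!(2*i-2)) (vs!(2*i-1)) + ct (2*i-2) * s (vs!(2*i-2)) (vs!(2*i-1))
     - st (2*i) * c (vs!(2*i-3)) (vs!(2*i-2)) + ct (2*i) * s (vs!(2*i-3)) (vs!(2*i-2)) = 0"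
    using rec by auto
  show ?thesis
    using e3 e4 b2 bn rec1 rec2 fin sq cr unfolding cycle_cons_def Let_def n
    by (simp add: numeral_2_eq_2 numeral_3_eq_3)
qed


lemma cycle_a:
  fixes c s :: "'b \<Rightarrow> 'b \<Rightarrow> real" and a b :: "'b \<Rightarrow> real"
  assumes cyc: "is_cycle B L vs"
    and hc: "\<forall>i j. {i,j} \<in> L \<longrightarrow> c i j = a i * a j + b i * b j"
    and hd: "\<forall>i\<in>B. c i i = a i * a i + b i * b i"
    and hs: "\<forall>i j. {i,j} \<in> L \<longrightarrow> s i j = a i * b j - b i * a j"
    and coup: "coupling L c s"
  shows "cycle_cons c s vs (\<lambda>k. a (vs!0) * a (vs!(k-1)) + b (vs!0) * b (vs!(k-1)))
                              (\<lambda>k. a (vs!0) * b (vs!(k-1)) - b (vs!0) * a (vs!(k-1)))"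
proof -
  define n where "n = length vs"
  define ct where "ct k = a (vs!0) * a (vs!(k-1)) + b (vs!0) * b (vs!(k-1))" for k
  define st where "st k = a (vs!0) * b (vs!(k-1)) - b (vs!0) * a (vs!(k-1))" for k
  have n3: "n \<ge> 3" and inB: "\<And>p. p<n \<Longrightarrow> vs!p \<in> B" and edge0: "\<forall>i<n. {vs!i, vs!((i+1) mod n)} \<in> L"
    using cyc by (auto simp: is_cycle_def n_def)
  have edge: "{vs!p, vs!Suc p} \<in> L" if h: "Suc p < n" for p
  proof -
    have "(p+1) mod n = Suc p" using h by simp
    moreover have "p < n" using h by simp
    ultimately show ?thesis using edge0[rule_format, of p] by simp
  qed
  have edgeL: "{vs!(n-1), vs!0} \<in> L" using edge0[rule_format, of "n-1"] n3 by simp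
  have Cq: "\<And>p q. q = Suc p \<Longrightarrow> q < n \<Longrightarrow> c (vs!p) (vs!q) = a (vs!p) * a (vs!q) + b (vs!p) * b (vs!q)"
    using hc edge by blast
  have Sq: "\<And>p q. q = Suc p \<Longrightarrow> q < n \<Longrightarrow> s (vs!p) (vs!q) = a (vs!p) * b (vs!q) - b (vs!p) * a (vs!q)"
    using hs edge by blast
  have CL: "c (vs!(n-1)) (vs!0) = a (vs!(n-1)) * a (vs!0) + b (vs!(n-1)) * b (vs!0)"
    "s (vs!(n-1)) (vs!0) = a (vs!(n-1)) * b (vs!0) - b (vs!(n-1)) * a (vs!0)"
    using hc hs edgeL by blast+
  have CL': "c (vs!0) (vs!(n-1)) = a (vs!0) * a (vs!(n-1)) + b (vs!0) * b (vs!(n-1))"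
    "s (vs!0) (vs!(n-1)) = a (vs!0) * b (vs!(n-1)) - b (vs!0) * a (vs!(n-1))"
    using hc hs edgeL by (metis insert_commute)+
  have D: "\<And>p. p < n \<Longrightarrow> c (vs!p) (vs!p) = a (vs!p) * a (vs!p) + b (vs!p) * b (vs!p)"
    using hd inB by blast
  have "cycle_cons c s vs ct st"
  proof (rule cc_intro[OF n_def[symmetric]])
    show "n = 3 \<longrightarrow> s (vs!0) (vs!1) * c (vs!2) (vs!2) + c (vs!1) (vs!2) * s (vs!2) (vs!0) + s (vs!1) (vs!2) * c (vs!2) (vs!0) = 0 \<and>
        c (vs!0) (vs!1) * c (vs!2) (vs!2) - c (vs!1) (vs!2) * c (vs!2) (vs!0) + s (vs!1) (vs!2) * s (vs!2) (vs!0) = 0"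
    proof
      assume h: "n = 3"
      have r: "c (vs!0) (vs!1) = a (vs!0) * a (vs!1) + b (vs!0) * b (vs!1)"
        "s (vs!0) (vs!1) = a (vs!0) * b (vs!1) - b (vs!0) * a (vs!1)"
        "c (vs!1) (vs!2) = a (vs!1) * a (vs!2) + b (vs!1) * b (vs!2)"
        "s (vs!1) (vs!2) = a (vs!1) * b (vs!2) - b (vs!1) * a (vs!2)"
        "c (vs!2) (vs!0) = a (vs!2) * a (vs!0) + b (vs!2) * b (vs!0)"
        "s (vs!2) (vs!0) = a (vs!2) * b (vs!0) - b (vs!2) * a (vs!0)"
        "c (vs!2) (vs!2) = a (vs!2) * a (vs!2) + b (vs!2) * b (vs!2)"
        using Cq[of 1 0] Sq[of 1 0] Cq[of 2 1] Sq[of 2 1] CL D[of 2] h by simp_all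
      show "s (vs!0) (vs!1) * c (vs!2) (vs!2) + c (vs!1) (vs!2) * s (vs!2) (vs!0) + s (vs!1) (vs!2) * c (vs!2) (vs!0) = 0 \<and>
        c (vs!0) (vs!1) * c (vs!2) (vs!2) - c (vs!1) (vs!2) * c (vs!2) (vs!0) + s (vs!1) (vs!2) * s (vs!2) (vs!0) = 0"
        unfolding r by algebra
    qed
    show "n = 4 \<longrightarrow> s (vs!0) (vs!1) * c (vs!2) (vs!3) + c (vs!0) (vs!1) * s (vs!2) (vs!3) + s (vs!1) (vs!2) * c (vs!3) (vs!0) + c (vs!1) (vs!2) * s (vs!3) (vs!0) = 0 \<and>
        c (vs!0) (vs!1) * c (vs!2) (vs!3) - s (vs!0) (vs!1) * s (vs!2) (vs!3) - c (vs!1) (vs!2) * c (vs!3) (vs!0) + s (vs!1) (vs!2) * s (vs!3) (vs!0) = 0"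
    proof
      assume h: "n = 4"
      have r: "c (vs!0) (vs!1) = a (vs!0) * a (vs!1) + b (vs!0) * b (vs!1)"
        "s (vs!0) (vs!1) = a (vs!0) * b (vs!1) - b (vs!0) * a (vs!1)"
        "c (vs!1) (vs!2) = a (vs!1) * a (vs!2) + b (vs!1) * b (vs!2)"
        "s (vs!1) (vs!2) = a (vs!1) * b (vs!2) - b (vs!1) * a (vs!2)"
        "c (vs!2) (vs!3) = a (vs!2) * a (vs!3) + b (vs!2) * b (vs!3)"
        "s (vs!2) (vs!3) = a (vs!2) * b (vs!3) - b (vs!2) * a (vs!3)"
        "c (vs!3) (vs!0) = a (vs!3) * a (vs!0) + b (vs!3) * b (vs!0)"
        "s (vs!3) (vs!0) = a (vs!3) * b (vs!0) - b (vs!3) * a (vs!0)"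
        using Cq[of 1 0] Sq[of 1 0] Cq[of 2 1] Sq[of 2 1] Cq[of 3 2] Sq[of 3 2] CL h by simp_all
      show "s (vs!0) (vs!1) * c (vs!2) (vs!3) + c (vs!0) (vs!1) * s (vs!2) (vs!3) + s (vs!1) (vs!2) * c (vs!3) (vs!0) + c (vs!1) (vs!2) * s (vs!3) (vs!0) = 0 \<and>
        c (vs!0) (vs!1) * c (vs!2) (vs!3) - s (vs!0) (vs!1) * s (vs!2) (vs!3) - c (vs!1) (vs!2) * c (vs!3) (vs!0) + s (vs!1) (vs!2) * s (vs!3) (vs!0) = 0"
        unfolding r by algebra
    qed
    show "ct 2 = c (vs!0) (vs!1) \<and> st 2 = s (vs!0) (vs!1)"
      using Cq[of 1 0] Sq[of 1 0] n3 by (simp add: ct_def st_def)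
    show "ct n = c (vs!0) (vs!(n-1)) \<and> st n = s (vs!0) (vs!(n-1))"
      using CL' by (simp add: ct_def st_def)
    show "\<forall>i. 2 \<le> i \<and> 2*i \<le> n \<longrightarrow>
     ct (2*i-2) * c (vs!(2*i-2)) (vs!(2*i-1)) - st (2*i-2) * s (vs!(2*i-2)) (vs!(2*i-1))
     - ct (2*i) * c (vs!(2*i-3)) (vs!(2*i-2)) - st (2*i) * s (vs!(2*i-3)) (vs!(2*i-2)) = 0 \<and>
     st (2*i-2) * c (vs!(2*i-2)) (vs!(2*i-1)) + ct (2*i-2) * s (vs!(2*i-2)) (vs!(2*i-1))
     - st (2*i) * c (vs!(2*i-3)) (vs!(2*i-2)) + ct (2*i) * s (vs!(2*i-3)) (vs!(2*i-2)) = 0"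
    proof (intro allI impI)
      fix i assume i: "2 \<le> i \<and> 2*i \<le> n"
      define p where "p = 2*i-3"
      have idx: "2*i-3 = p" "2*i-2 = Suc p" "2*i-1 = Suc (Suc p)" using i by (auto simp: p_def)
      have lt: "Suc (Suc p) < n" unfolding p_def using i by arith
      have lt1: "Suc p < n" using lt by simp
      note r = Cq[OF refl lt1] Sq[OF refl lt1] Cq[OF refl lt] Sq[OF refl lt]
      show "ct (2*i-2) * c (vs!(2*i-2)) (vs!(2*i-1)) - st (2*i-2) * s (vs!(2*i-2)) (vs!(2*i-1))
     - ct (2*i) * c (vs!(2*i-3)) (vs!(2*i-2)) - st (2*i) * s (vs!(2*i-3)) (vs!(2*i-2)) = 0 \<and>
     st (2*i-2) * c (vs!(2*i-2)) (vs!(2*i-1)) + ct (2*i-2) * s (vs!(2*i-2)) (vs!(2*i-1))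
     - st (2*i) * c (vs!(2*i-3)) (vs!(2*i-2)) + ct (2*i) * s (vs!(2*i-3)) (vs!(2*i-2)) = 0"
        unfolding ct_def st_def by (simp only: idx diff_Suc_1 r) algebra
    qed
    show "odd n \<and> n \<ge> 5 \<longrightarrow>
   ct (n-1) * c (vs!(n-2)) (vs!(n-1)) - st (n-1) * s (vs!(n-2)) (vs!(n-1)) - c (vs!(n-1)) (vs!0) * c (vs!(n-2)) (vs!(n-2)) = 0 \<and>
   st (n-1) * c (vs!(n-2)) (vs!(n-1)) + ct (n-1) * s (vs!(n-2)) (vs!(n-1)) + s (vs!(n-1)) (vs!0) * c (vs!(n-2)) (vs!(n-2)) = 0"
    proof
      have idx: "n-1-1 = n-2" by simp
      have e1: "n-1 = Suc (n-2)" "n-1 < n" "n-2 < n" using n3 by auto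
      note r = Cq[OF e1(1,2)] Sq[OF e1(1,2)] D[OF e1(3)]
      show "ct (n-1) * c (vs!(n-2)) (vs!(n-1)) - st (n-1) * s (vs!(n-2)) (vs!(n-1)) - c (vs!(n-1)) (vs!0) * c (vs!(n-2)) (vs!(n-2)) = 0 \<and>
   st (n-1) * c (vs!(n-2)) (vs!(n-1)) + ct (n-1) * s (vs!(n-2)) (vs!(n-1)) + s (vs!(n-1)) (vs!0) * c (vs!(n-2)) (vs!(n-2)) = 0"
        unfolding ct_def st_def idx r CL by algebra
    qed
    show "\<forall>i. even i \<and> 2 \<le> i \<and> i \<le> n - 1 \<longrightarrow> (st i)\<^sup>2 + (ct i)\<^sup>2 = c (vs!0) (vs!0) * c (vs!(i-1)) (vs!(i-1))"
    proof (intro allI impI)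
      fix i assume i: "even i \<and> 2 \<le> i \<and> i \<le> n - 1"
      have r: "c (vs!0) (vs!0) = a (vs!0) * a (vs!0) + b (vs!0) * b (vs!0)"
        "c (vs!(i-1)) (vs!(i-1)) = a (vs!(i-1)) * a (vs!(i-1)) + b (vs!(i-1)) * b (vs!(i-1))"
        using D[of 0] D[of "i-1"] i n3 by auto
      show "(st i)\<^sup>2 + (ct i)\<^sup>2 = c (vs!0) (vs!0) * c (vs!(i-1)) (vs!(i-1))"
        unfolding ct_def st_def r by algebra
    qed
    show "\<forall>k<n. (c (vs!k) (vs!((k+1) mod n)))\<^sup>2 + (s (vs!k) (vs!((k+1) mod n)))\<^sup>2
           = c (vs!k) (vs!k) * c (vs!((k+1) mod n)) (vs!((k+1) mod n))"
      using edge0 coup by (auto simp: coupling_def)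
  qed
  then show ?thesis unfolding ct_def[abs_def] st_def[abs_def] .
qed


lemma line_polar:
  fixes c s :: "'b \<Rightarrow> 'b \<Rightarrow> real" and \<theta> :: "'b \<Rightarrow> real"
  assumes coup: "coupling L c s" and ang: "angle_cons L c s \<theta>"
    and sym: "\<forall>i j. {i,j} \<in> L \<longrightarrow> c i j = c j i \<and> s i j = - s j i"
    and ij: "{i,j} \<in> L"
  shows "c i j = sqrt (c i i) * sqrt (c j j) * cos (\<theta> j - \<theta> i) \<and>
         s i j = sqrt (c i i) * sqrt (c j j) * sin (\<theta> j - \<theta> i)"
proof -
  obtain i0 j0 where e: "{i,j} = {i0,j0}" and th: "\<theta> j0 - \<theta> i0 = atan2 (s i0 j0) (c i0 j0)"
    using ang ij unfolding angle_cons_def by blast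
  have L0: "{i0,j0} \<in> L" using ij unfolding e .
  define z where "z = Complex (c i0 j0) (s i0 j0)"
  have "(c i0 j0)\<^sup>2 + (s i0 j0)\<^sup>2 = c i0 i0 * c j0 j0" using coup L0 by (simp add: coupling_def)
  then have cm: "cmod z = sqrt (c i0 i0) * sqrt (c j0 j0)"
    by (simp add: z_def cmod_def real_sqrt_mult)
  have zr: "z = rcis (cmod z) (Arg z)" by (rule rcis_cmod_Arg[symmetric])
  have az: "Arg z = \<theta> j0 - \<theta> i0" using th by (simp add: atan2_def z_def)
  have p1: "c i0 j0 = cmod z * cos (Arg z)"
    using arg_cong[OF zr, of Re] by (simp add: z_def rcis_def)
  have p2: "s i0 j0 = cmod z * sin (Arg z)"
    using arg_cong[OF zr, of Im] by (simp add: z_def rcis_def)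
  have q: "c i0 j0 = sqrt (c i0 i0) * sqrt (c j0 j0) * cos (\<theta> j0 - \<theta> i0)"
    "s i0 j0 = sqrt (c i0 i0) * sqrt (c j0 j0) * sin (\<theta> j0 - \<theta> i0)"
    using p1 p2 cm az by simp_all
  from e have "(i = i0 \<and> j = j0) \<or> (i = j0 \<and> j = i0)" by (auto simp: doubleton_eq_iff)
  then show ?thesis
  proof
    assume "i = i0 \<and> j = j0" then show ?thesis using q by simp
  next
    assume h: "i = j0 \<and> j = i0"
    have sy: "c j0 i0 = c i0 j0" "s j0 i0 = - s i0 j0" using sym L0 by (metis insert_commute)+
    have cs: "cos (\<theta> i0 - \<theta> j0) = cos (\<theta> j0 - \<theta> i0)" by (metis cos_minus minus_diff_eq)
    have sn: "sin (\<theta> i0 - \<theta> j0) = - sin (\<theta> j0 - \<theta> i0)" by (metis sin_minus minus_diff_eq)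
    have "c j0 i0 = sqrt (c j0 j0) * sqrt (c i0 i0) * cos (\<theta> i0 - \<theta> j0)"
      unfolding sy(1) q(1) cs by (simp add: ac_simps)
    moreover have "s j0 i0 = sqrt (c j0 j0) * sqrt (c i0 i0) * sin (\<theta> i0 - \<theta> j0)"
      unfolding sy(2) q(2) sn by (simp add: ac_simps)
    ultimately show ?thesis using h by simp
  qed
qed

lemma polar_ab:
  fixes c s :: "'b \<Rightarrow> 'b \<Rightarrow> real" and \<theta> :: "'b \<Rightarrow> real"
  assumes "c i j = sqrt (c i i) * sqrt (c j j) * cos (\<theta> j - \<theta> i) \<and>
         s i j = sqrt (c i i) * sqrt (c j j) * sin (\<theta> j - \<theta> i)"
  shows "c i j = (sqrt (c i i) * cos (\<theta> i)) * (sqrt (c j j) * cos (\<theta> j)) + (sqrt (c i i) * sin (\<theta> i)) * (sqrt (c j j) * sin (\<theta> j))"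
    and "s i j = (sqrt (c i i) * cos (\<theta> i)) * (sqrt (c j j) * sin (\<theta> j)) - (sqrt (c i i) * sin (\<theta> i)) * (sqrt (c j j) * cos (\<theta> j))"
  using assms by (simp_all add: cos_diff sin_diff algebra_simps)

theorem proposition8:
  fixes B :: "'b set" and L :: "'b set set" and G :: "'b set"
    and Gm Bm :: "'b \<Rightarrow> 'b \<Rightarrow> real"
    and pd qd Vmin Vmax pmin pmax qmin qmax :: "'b \<Rightarrow> real"
    and Cs :: "'b list list"
  assumes net: "network B L"
    and gen: "G \<subseteq> B"
    and vbounds: "\<forall>i\<in>B. 0 < Vmin i \<and> Vmin i \<le> Vmax i"
    and gbounds: "\<forall>i\<in>G. pmin i \<le> pmax i \<and> qmin i \<le> qmax i"
    and basis: "cycle_basis B L Cs"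
  shows
    "(\<forall>pg qg c s \<theta>.
        ALT B L G Gm Bm pd qd Vmin Vmax pmin pmax qmin qmax pg qg c s \<and> coupling L c s \<and>
        angle_cons L c s \<theta> \<longrightarrow>
        (\<exists>ct st :: nat \<Rightarrow> nat \<Rightarrow> real.
           \<forall>m < length Cs. cycle_cons c s (Cs ! m) (ct m) (st m))) \<and>
     (\<forall>pg qg c s.
        ALT B L G Gm Bm pd qd Vmin Vmax pmin pmax qmin qmax pg qg c s \<and> coupling L c s \<and>
        (\<exists>ct st :: nat \<Rightarrow> nat \<Rightarrow> real.
           \<forall>m < length Cs. cycle_cons c s (Cs ! m) (ct m) (st m)) \<longrightarrow>
        (\<forall>m < length Cs. \<exists>k :: int. cycle_angle_sum c s (Cs ! m) = 2 * pi * of_int k))"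
  proof (intro conjI allI impI)
  fix pg qg c s \<theta>
  assume H: "ALT B L G Gm Bm pd qd Vmin Vmax pmin pmax qmin qmax pg qg c s \<and> coupling L c s \<and>
        angle_cons L c s \<theta>"
  have sym: "\<forall>i j. {i,j} \<in> L \<longrightarrow> c i j = c j i \<and> s i j = - s j i" using H unfolding ALT_def by blast
  have cnn: "\<forall>i\<in>B. c i i \<ge> 0"
  proof
    fix i assume i: "i \<in> B"
    have "(Vmin i)\<^sup>2 \<le> c i i" using H i unfolding ALT_def by blast
    moreover have "(Vmin i)\<^sup>2 \<ge> 0" by simp
    ultimately show "c i i \<ge> 0" by linarith
  qed
  define a where "a v = sqrt (c v v) * cos (\<theta> v)" for v
  define b where "b v = sqrt (c v v) * sin (\<theta> v)" for v
  have coupH: "coupling L c s" and angH: "angle_cons L c s \<theta>" using H by simp_all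
  have hcs: "c i j = a i * a j + b i * b j \<and> s i j = a i * b j - b i * a j" if ij: "{i,j} \<in> L" for i j
  proof -
    have p: "c i j = sqrt (c i i) * sqrt (c j j) * cos (\<theta> j - \<theta> i) \<and>
         s i j = sqrt (c i i) * sqrt (c j j) * sin (\<theta> j - \<theta> i)"
      by (rule line_polar[OF coupH angH sym ij])
    show ?thesis using p by (simp add: a_def b_def cos_diff sin_diff algebra_simps)
  qed
  have hc: "\<forall>i j. {i,j} \<in> L \<longrightarrow> c i j = a i * a j + b i * b j" using hcs by blast
  have hs: "\<forall>i j. {i,j} \<in> L \<longrightarrow> s i j = a i * b j - b i * a j" using hcs by blast
  have hd: "\<forall>i\<in>B. c i i = a i * a i + b i * b i"
  proof
    fix i assume i: "i \<in> B"
    have "a i * a i + b i * b i = (sqrt (c i i))\<^sup>2 * ((cos (\<theta> i))\<^sup>2 + (sin (\<theta> i))\<^sup>2)"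
      unfolding a_def b_def by algebra
    also have "\<dots> = c i i" using cnn i by simp
    finally show "c i i = a i * a i + b i * b i" by simp
  qed
  have cyc: "\<And>m. m < length Cs \<Longrightarrow> is_cycle B L (Cs!m)"
    using basis by (simp add: cycle_basis_def)
  show "\<exists>ct st :: nat \<Rightarrow> nat \<Rightarrow> real. \<forall>m < length Cs. cycle_cons c s (Cs ! m) (ct m) (st m)"
    apply (rule exI[of _ "\<lambda>m k. a (Cs!m!0) * a (Cs!m!(k-1)) + b (Cs!m!0) * b (Cs!m!(k-1))"])
    apply (rule exI[of _ "\<lambda>m k. a (Cs!m!0) * b (Cs!m!(k-1)) - b (Cs!m!0) * a (Cs!m!(k-1))"])
    using cycle_a[OF cyc hc hd hs coupH] by blast
next
  fix pg qg c s m
  assume H: "ALT B L G Gm Bm pd qd Vmin Vmax pmin pmax qmin qmax pg qg c s \<and> coupling L c s \<and>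
        (\<exists>ct st :: nat \<Rightarrow> nat \<Rightarrow> real. \<forall>m < length Cs. cycle_cons c s (Cs ! m) (ct m) (st m))"
    and m: "m < length Cs"
  have sym: "\<forall>i j. {i,j} \<in> L \<longrightarrow> c i j = c j i \<and> s i j = - s j i" using H unfolding ALT_def by blast
  have pos: "\<forall>i\<in>B. c i i > 0"
  proof
    fix i assume i: "i \<in> B"
    have "(Vmin i)\<^sup>2 \<le> c i i" using H i unfolding ALT_def by blast
    moreover have "(Vmin i)\<^sup>2 > 0" using vbounds i by force
    ultimately show "c i i > 0" by linarith
  qed
  have coupH: "coupling L c s" using H by simp
  obtain ct st :: "nat \<Rightarrow> nat \<Rightarrow> real" where cc: "\<forall>m < length Cs. cycle_cons c s (Cs ! m) (ct m) (st m)"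
    using H by blast
  have cyc: "is_cycle B L (Cs!m)" using basis m by (simp add: cycle_basis_def)
  show "\<exists>k :: int. cycle_angle_sum c s (Cs ! m) = 2 * pi * of_int k"
    using cycle_b[OF cyc sym pos coupH] cc m by blast
qed

end
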